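(* Let $\mathbb{R}^n$ and $\mathbb{R}^m$ be endowed with arbitrary norms (both denoted $\|\cdot\|$) and let $A\in\mathbb{R}^{m\times n}$ have at least two different columns. Then \[ \max_{w\in\mathbb{R}^n\setminus\{0\},\ \langle\mathbf{1},w\rangle=0}\frac{\|Aw\|}{\|w\|}=\max_{u\in\mathrm{conv}(A),\ x\in\Delta_{n-1}\setminus Z(u)}\frac{\|Ax-u\|}{\mathrm{dist}(x,Z(u))}, \] and \[ \frac{\Phi(A)}{\max_{i=1,\dots,n}\|e_i\|}\le\min_{u\in\mathrm{conv}(A),\ x\in\Delta_{n-1}\setminus Z(u)}\frac{2\|Ax-u\|}{\mathrm{dist}(x,Z(u))}. \]
   Context: $\mathbf{1}$ is the all-ones vector and $e_i$ the standard basis vectors of $\mathbb{R}^n$. $\Delta_{n-1}=\{x\in\mathbb{R}^n_+:\sum_ix_i=1\}$; $A$ is identified with the set of its columns; $\mathrm{conv}(A)=\{Ax:x\in\Delta_{n-1}\}$; for $u\in\mathrm{conv}(A)$, $Z(u)=\{z\in\Delta_{n-1}:Az=u\}$ and $\mathrm{dist}(x,Z(u))=\min_{z\in Z(u)}\|x-z\|$ (norm of $\mathbb{R}^n$). The facial distance is $\Phi(A)=\min\{\mathrm{dist}(F,\mathrm{conv}(A\setminus F)):F\text{ a face of }\mathrm{conv}(A),\ \emptyset\ne F\ne\mathrm{conv}(A)\}$, with $A\setminus F$ the columns of $A$ not in $F$ and $\mathrm{dist}(F,G)=\inf_{u\in F,w\in G}\|u-w\|$ (norm of $\mathbb{R}^m$).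 *)

theory Defs
  imports "HOL-Analysis.Analysis"
begin

definition is_norm :: "('a::real_vector \<Rightarrow> real) \<Rightarrow> bool" where
  "is_norm N \<longleftrightarrow> (\<forall>x. N x \<ge> 0) \<and> (\<forall>x. N x = 0 \<longleftrightarrow> x = 0)
     \<and> (\<forall>c x. N (c *\<^sub>R x) = \<bar>c\<bar> * N x) \<and> (\<forall>x y. N (x + y) \<le> N x + N y)"

definition std_simplex :: "(real^'n) set" where
  "std_simplex = {x. (\<forall>i. x $ i \<ge> 0) \<and> (\<Sum>i\<in>UNIV. x $ i) = 1}"

definition convA :: "real^'n^'m \<Rightarrow> (real^'m) set" where
  "convA A = (\<lambda>x. A *v x) ` std_simplex"

definition Zset :: "real^'n^'m \<Rightarrow> real^'m \<Rightarrow> (real^'n) set" where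
  "Zset A u = {z \<in> std_simplex. A *v z = u}"

definition distN :: "('a::real_vector \<Rightarrow> real) \<Rightarrow> 'a \<Rightarrow> 'a set \<Rightarrow> real" where
  "distN N x S = Inf {N (x - z) | z. z \<in> S}"

definition setdistN :: "('a::real_vector \<Rightarrow> real) \<Rightarrow> 'a set \<Rightarrow> 'a set \<Rightarrow> real" where
  "setdistN N F G = Inf {N (u - w) | u w. u \<in> F \<and> w \<in> G}"

text \<open>Facial distance Phi(A); A minus F is the set of columns of A not lying in F.\<close>
definition facial_distance :: "(real^'m \<Rightarrow> real) \<Rightarrow> real^'n^'m \<Rightarrow> real" where
  "facial_distance N A = Inf {setdistN N F (convex hull {column i A | i. column i A \<notin> F}) | F.
      F face_of convA A \<and> F \<noteq> {} \<and> F \<noteq> convA A}"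

definition is_max :: "real set \<Rightarrow> real \<Rightarrow> bool" where
  "is_max S v \<longleftrightarrow> v \<in> S \<and> (\<forall>y\<in>S. y \<le> v)"

definition is_min :: "real set \<Rightarrow> real \<Rightarrow> bool" where
  "is_min S v \<longleftrightarrow> v \<in> S \<and> (\<forall>y\<in>S. v \<le> y)"

end

theory Submission
  imports Defs
begin


lemma isn_0: "is_norm N \<Longrightarrow> N 0 = 0" by (simp add: is_norm_def)
lemma isn_ge0: "is_norm N \<Longrightarrow> N x \<ge> 0" by (simp add: is_norm_def)
lemma isn_pos: "is_norm N \<Longrightarrow> x \<noteq> 0 \<Longrightarrow> N x > 0"
  unfolding is_norm_def by (metis less_eq_real_def)
lemma isn_scale: "is_norm N \<Longrightarrow> N (c *\<^sub>R x) = \<bar>c\<bar> * N x" by (simp add: is_norm_def)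
lemma isn_tri: "is_norm N \<Longrightarrow> N (x + y) \<le> N x + N y" by (simp add: is_norm_def)
lemma isn_minus: "is_norm N \<Longrightarrow> N (- x) = N x"
  using isn_scale[of N "-1" x] by simp
lemma isn_commute: "is_norm N \<Longrightarrow> N (x - y) = N (y - x)"
  using isn_minus[of N "x - y"] by simp
lemma isn_tri_diff: "is_norm N \<Longrightarrow> N x - N y \<le> N (x - y)"
  using isn_tri[of N "x - y" y] by simp
lemma isn_sum: assumes N: "is_norm N" and "finite S" shows "N (sum f S) \<le> (\<Sum>i\<in>S. N (f i))"
  using assms(2)
proof (induction S rule: finite_induct)
  case empty then show ?case by (simp add: isn_0[OF N])
next
  case (insert x F)
  then show ?case using isn_tri[OF N, of "f x" "sum f F"] by simp
qed

lemma isn_vec_bound: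
  fixes v :: "real^'n"
  assumes "is_norm N"
  shows "N v \<le> (\<Sum>i\<in>UNIV. \<bar>v$i\<bar> * N (axis i 1))"
proof -
  have "v = (\<Sum>i\<in>UNIV. (v$i) *\<^sub>R axis i 1)"
    using basis_expansion[of v] by (simp add: scalar_mult_eq_scaleR)
  then have "N v = N (\<Sum>i\<in>UNIV. (v$i) *\<^sub>R axis i 1)" by simp
  also have "\<dots> \<le> (\<Sum>i\<in>UNIV. N ((v$i) *\<^sub>R axis i 1))" by (rule isn_sum[OF assms]) simp
  also have "\<dots> = (\<Sum>i\<in>UNIV. \<bar>v$i\<bar> * N (axis i 1))" using isn_scale[OF assms] by simp
  finally show ?thesis .
qed

lemma isn_lip:
  fixes v :: "real^'n"
  assumes "is_norm N"
  shows "N v \<le> (\<Sum>i\<in>UNIV. N (axis i 1)) * norm v"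
proof -
  have "N v \<le> (\<Sum>i\<in>UNIV. \<bar>v$i\<bar> * N (axis i 1))" by (rule isn_vec_bound[OF assms])
  also have "\<dots> \<le> (\<Sum>i\<in>UNIV. norm v * N (axis i 1))"
    by (rule sum_mono, rule mult_right_mono) (auto simp: component_le_norm_cart isn_ge0[OF assms])
  also have "\<dots> = (\<Sum>i\<in>UNIV. N (axis i 1)) * norm v" by (simp add: sum_distrib_left mult.commute)
  finally show ?thesis .
qed

lemma isn_cont:
  fixes N :: "real^'n \<Rightarrow> real"
  assumes "is_norm N"
  shows "continuous_on S N"
proof -
  define C where "C = (\<Sum>i\<in>UNIV. N (axis i (1::real)) :: real)"
  have C0: "C \<ge> 0" unfolding C_def by (rule sum_nonneg) (simp add: isn_ge0[OF assms])
  have "C-lipschitz_on S N"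
  proof (rule lipschitz_onI)
    fix x y :: "real^'n"
    have "N x - N y \<le> C * norm (x - y)" using isn_tri_diff[OF assms, of x y] isn_lip[OF assms, of "x - y"]
      unfolding C_def by linarith
    moreover have "N y - N x \<le> C * norm (x - y)" using isn_tri_diff[OF assms, of y x] isn_lip[OF assms, of "y - x"]
      unfolding C_def by (simp add: norm_minus_commute)
    ultimately show "dist (N x) (N y) \<le> C * dist x y" by (simp add: dist_real_def dist_norm abs_le_iff)
  qed (rule C0)
  then show ?thesis by (rule lipschitz_on_continuous_on)
qed



lemma simplex_ge0: "x \<in> std_simplex \<Longrightarrow> 0 \<le> x$i" by (simp add: std_simplex_def)
lemma simplex_sum: "x \<in> std_simplex \<Longrightarrow> (\<Sum>i\<in>UNIV. x$i) = 1" by (simp add: std_simplex_def)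
lemma simplex_le1: assumes "x \<in> std_simplex" shows "x$i \<le> 1"
proof -
  have "x$i \<le> (\<Sum>j\<in>UNIV. x$j)"
    by (rule member_le_sum) (use assms in \<open>auto simp: std_simplex_def\<close>)
  then show ?thesis using simplex_sum[OF assms] by simp
qed

lemma closed_simplex: "closed (std_simplex :: (real^'n) set)"
proof -
  have "std_simplex = (\<Inter>i. {x::real^'n. 0 \<le> x$i}) \<inter> {x. (\<Sum>i\<in>UNIV. x$i) = 1}"
    by (auto simp: std_simplex_def)
  moreover have "closed {x::real^'n. (\<Sum>i\<in>UNIV. x$i) = 1}"
    by (intro closed_Collect_eq continuous_intros)
  moreover have "closed (\<Inter>i. {x::real^'n. 0 \<le> x$i})"
    by (intro closed_INT ballI closed_Collect_le continuous_intros)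
  ultimately show ?thesis by (metis closed_Int)
qed

lemma bounded_simplex: "bounded (std_simplex :: (real^'n) set)"
proof -
  have "std_simplex \<subseteq> cball (0::real^'n) 1"
  proof
    fix x :: "real^'n" assume x: "x \<in> std_simplex"
    have "norm x \<le> (\<Sum>i\<in>UNIV. \<bar>x$i\<bar>)" by (rule norm_le_l1_cart)
    also have "\<dots> = 1" using x by (simp add: std_simplex_def)
    finally show "x \<in> cball 0 1" by simp
  qed
  then show ?thesis using bounded_cball bounded_subset by blast
qed

lemma compact_simplex: "compact (std_simplex :: (real^'n) set)"
  using closed_simplex bounded_simplex compact_eq_bounded_closed by blast

lemma compact_Zset: "compact (Zset A u)"
proof -
  have "Zset A u = std_simplex \<inter> {z. A *v z = u}" by (auto simp: Zset_def)
  moreover have "closed {z. A *v z = u}"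
    by (intro closed_Collect_eq continuous_intros)
  ultimately show ?thesis using compact_simplex by auto
qed

lemma Zset_ne: "u \<in> convA A \<Longrightarrow> Zset A u \<noteq> {}"
  by (auto simp: convA_def Zset_def)

lemma nearest:
  fixes A :: "real^'n^'m"
  assumes N: "is_norm N" and u: "u \<in> convA A"
  obtains z where "z \<in> Zset A u" "distN N x (Zset A u) = N (x - z)"
    "\<And>z'. z' \<in> Zset A u \<Longrightarrow> N (x - z) \<le> N (x - z')"
proof -
  have "continuous_on (Zset A u) (\<lambda>z. N (x - z))"
    by (rule continuous_on_compose2[OF isn_cont[OF N, of UNIV]]) (auto intro!: continuous_intros)
  then obtain z where z: "z \<in> Zset A u" "\<And>z'. z' \<in> Zset A u \<Longrightarrow> N (x - z) \<le> N (x - z')"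
    using continuous_attains_inf[OF compact_Zset Zset_ne[OF u]] by blast
  have "distN N x (Zset A u) = N (x - z)"
    unfolding distN_def by (rule cInf_eq_minimum) (use z in auto)
  then show ?thesis using that z by blast
qed

lemma dist_pos:
  fixes A :: "real^'n^'m"
  assumes N: "is_norm N" and u: "u \<in> convA A" and x: "x \<notin> Zset A u"
  obtains z where "z \<in> Zset A u" "distN N x (Zset A u) = N (x - z)"
    "\<And>z'. z' \<in> Zset A u \<Longrightarrow> N (x - z) \<le> N (x - z')" "x \<noteq> z" "distN N x (Zset A u) > 0"
proof -
  obtain z where z: "z \<in> Zset A u" "distN N x (Zset A u) = N (x - z)"
    "\<And>z'. z' \<in> Zset A u \<Longrightarrow> N (x - z) \<le> N (x - z')" using nearest[OF N u] by blast
  then have "x \<noteq> z" using x by auto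
  then have "N (x - z) > 0" using isn_pos[OF N] by simp
  then show ?thesis using that z \<open>x \<noteq> z\<close> by simp
qed



definition pp :: "real^'n \<Rightarrow> real^'n" where "pp w = (\<chi> i. max (w$i) 0)"
definition nn :: "real^'n \<Rightarrow> real^'n" where "nn w = (\<chi> i. max (- (w$i)) 0)"

lemma pp_nn: "w = pp w - nn w" by (simp add: pp_def nn_def vec_eq_iff max_def)
lemma pp_ge0: "0 \<le> pp w $ i" by (simp add: pp_def)
lemma nn_ge0: "0 \<le> nn w $ i" by (simp add: nn_def)
lemma abs_pp_nn: "\<bar>w$i\<bar> = pp w $ i + nn w $ i" by (simp add: pp_def nn_def)

definition KK :: "real^'n^'m \<Rightarrow> (real^'n \<Rightarrow> real) \<Rightarrow> ((real^'n) \<times> (real^'n)) set" where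
  "KK A N = {(q,p). q \<in> std_simplex \<and> p \<in> std_simplex \<and> (\<Sum>i\<in>UNIV. \<bar>p$i - q$i\<bar>) = 2
     \<and> (\<forall>\<zeta>\<in>std_simplex. A *v \<zeta> = A *v q \<longrightarrow> N (p - q) \<le> N (p - \<zeta>))}"

lemma diff_decomp:
  fixes x z :: "real^'n"
  assumes x: "x \<in> std_simplex" and z: "z \<in> std_simplex" and xz: "x \<noteq> z"
  defines "w \<equiv> x - z"
  defines "l \<equiv> (\<Sum>i\<in>UNIV. pp w $ i)"
  shows "l > 0" "(\<Sum>i\<in>UNIV. nn w $ i) = l" "\<And>i. nn w $ i \<le> z $ i"
    "(1/l) *\<^sub>R pp w \<in> std_simplex" "(1/l) *\<^sub>R nn w \<in> std_simplex"
    "(\<Sum>i\<in>UNIV. \<bar>((1/l) *\<^sub>R pp w - (1/l) *\<^sub>R nn w)$i\<bar>) = 2"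
    "x - z = l *\<^sub>R ((1/l) *\<^sub>R pp w - (1/l) *\<^sub>R nn w)"
proof -
  have sw: "(\<Sum>i\<in>UNIV. w$i) = 0" using simplex_sum[OF x] simplex_sum[OF z]
    by (simp add: w_def sum_subtractf)
  have "(\<Sum>i\<in>UNIV. w$i) = (\<Sum>i\<in>UNIV. pp w $ i) - (\<Sum>i\<in>UNIV. nn w $ i)"
    by (subst pp_nn) (simp add: sum_subtractf)
  then show sn: "(\<Sum>i\<in>UNIV. nn w $ i) = l" using sw by (simp add: l_def)
  show "\<And>i. nn w $ i \<le> z $ i" using simplex_ge0[OF x] simplex_ge0[OF z]
    by (simp add: nn_def w_def)
  have l0: "l \<ge> 0" unfolding l_def by (rule sum_nonneg) (simp add: pp_ge0)
  show lpos: "l > 0"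
  proof (rule ccontr)
    assume "\<not> l > 0"
    then have "l = 0" using l0 by simp
    then have "\<forall>i\<in>UNIV. pp w $ i = 0" unfolding l_def by (subst sum_nonneg_eq_0_iff[symmetric]) (auto simp: pp_ge0)
    moreover have "\<forall>i\<in>UNIV. nn w $ i = 0" using sn \<open>l = 0\<close> by (subst sum_nonneg_eq_0_iff[symmetric]) (auto simp: nn_ge0)
    ultimately have "w = 0" by (subst pp_nn) (simp add: vec_eq_iff)
    then show False using xz by (simp add: w_def)
  qed
  show "(1/l) *\<^sub>R pp w \<in> std_simplex" using lpos
    by (simp add: std_simplex_def pp_ge0 l_def sum_divide_distrib[symmetric])
  show "(1/l) *\<^sub>R nn w \<in> std_simplex" using lpos sn
    by (simp add: std_simplex_def nn_ge0 sum_divide_distrib[symmetric])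
  have "(\<Sum>i\<in>UNIV. \<bar>((1/l) *\<^sub>R pp w - (1/l) *\<^sub>R nn w)$i\<bar>) = (\<Sum>i\<in>UNIV. (pp w $ i + nn w $ i) / l)"
    using lpos by (intro sum.cong refl) (auto simp: pp_def nn_def abs_if max_def divide_simps)
  also have "\<dots> = (l + l) / l" using sn by (simp add: sum_divide_distrib[symmetric] sum.distrib l_def)
  also have "\<dots> = 2" using lpos by simp
  finally show "(\<Sum>i\<in>UNIV. \<bar>((1/l) *\<^sub>R pp w - (1/l) *\<^sub>R nn w)$i\<bar>) = 2" .
  show "x - z = l *\<^sub>R ((1/l) *\<^sub>R pp w - (1/l) *\<^sub>R nn w)"
    using lpos pp_nn[of w] by (simp add: w_def algebra_simps)
qed

lemma reduction:
  fixes A :: "real^'n^'m"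
  assumes N: "is_norm N" and u: "u \<in> convA A" and x: "x \<in> std_simplex"
    and z: "z \<in> Zset A u" and xz: "x \<noteq> z"
    and near: "\<And>z'. z' \<in> Zset A u \<Longrightarrow> N (x - z) \<le> N (x - z')"
  obtains l q p where "l > 0" "(q,p) \<in> KK A N" "x - z = l *\<^sub>R (p - q)"
proof -
  have zs: "z \<in> std_simplex" and Az: "A *v z = u" using z by (auto simp: Zset_def)
  define w where "w = x - z"
  define l where "l = (\<Sum>i\<in>UNIV. pp w $ i)"
  define p where "p = (1/l) *\<^sub>R pp w"
  define q where "q = (1/l) *\<^sub>R nn w"
  note D = diff_decomp[OF x zs xz, folded w_def, folded l_def, folded p_def q_def]
  have lpos: "l > 0" by (rule D(1))
  have near2: "N (p - q) \<le> N (p - \<zeta>)" if \<zeta>: "\<zeta> \<in> std_simplex" "A *v \<zeta> = A *v q" for \<zeta>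
  proof -
    define z' where "z' = z - nn w + l *\<^sub>R \<zeta>"
    have "z' \<in> std_simplex"
    proof -
      have "\<forall>i. 0 \<le> z' $ i" using D(3) simplex_ge0[OF \<zeta>(1)] lpos
        by (simp add: z'_def)
      moreover have "(\<Sum>i\<in>UNIV. z' $ i) = 1"
        using simplex_sum[OF zs] simplex_sum[OF \<zeta>(1)] D(2)
        by (simp add: z'_def sum.distrib sum_subtractf sum_distrib_left[symmetric])
      ultimately show ?thesis by (simp add: std_simplex_def)
    qed
    moreover have "A *v z' = u"
    proof -
      have "A *v nn w = l *\<^sub>R (A *v q)" using lpos by (simp add: q_def matrix_vector_mult_scaleR)
      then show ?thesis using \<zeta>(2) Az by (simp add: z'_def algebra_simps)
    qed
    ultimately have "z' \<in> Zset A u" by (simp add: Zset_def)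
    then have "N (x - z) \<le> N (x - z')" by (rule near)
    moreover have "x - z = l *\<^sub>R (p - q)" using D(7) by (simp add: w_def)
    moreover have "x - z' = l *\<^sub>R (p - \<zeta>)"
      using lpos pp_nn[of w] by (simp add: z'_def p_def w_def algebra_simps)
    ultimately have "l * N (p - q) \<le> l * N (p - \<zeta>)" using isn_scale[OF N] lpos by simp
    then show ?thesis using lpos by simp
  qed
  have "(q,p) \<in> KK A N" unfolding KK_def using D(4,5,6) near2 by auto
  then show ?thesis using that lpos D(7) by (simp add: w_def)
qed



lemma isn_isCont: assumes N: "is_norm (N :: real^'n \<Rightarrow> real)" shows "isCont N x"
  using isn_cont[OF N, of UNIV] continuous_on_eq_continuous_at by blast

lemma isn_tendsto:
  assumes N: "is_norm (N :: real^'n \<Rightarrow> real)" and "f \<longlonglongrightarrow> a"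
  shows "(\<lambda>n. N (f n)) \<longlonglongrightarrow> N a"
  using isCont_tendsto_compose[OF isn_isCont[OF N] assms(2)] .

lemma KK_closed:
  fixes A :: "real^'n^'m"
  assumes N: "is_norm N"
  shows "closed (KK A N)"
  unfolding closed_sequential_limits
proof (intro allI impI, elim conjE)
  fix s and l :: "(real^'n) \<times> (real^'n)"
  assume s: "\<forall>n. s n \<in> KK A N" and lim: "s \<longlonglongrightarrow> l"
  obtain qs ps where l: "l = (qs, ps)" by (cases l)
  define Q where "Q n = fst (s n)" for n
  define P where "P n = snd (s n)" for n
  have sQP: "s n = (Q n, P n)" for n by (simp add: Q_def P_def)
  have KQ: "Q n \<in> std_simplex" "P n \<in> std_simplex" "(\<Sum>i\<in>UNIV. \<bar>P n$i - Q n$i\<bar>) = 2"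
     "\<And>\<zeta>. \<zeta>\<in>std_simplex \<Longrightarrow> A *v \<zeta> = A *v Q n \<Longrightarrow> N (P n - Q n) \<le> N (P n - \<zeta>)" for n
    using s[rule_format, of n] unfolding sQP KK_def by auto
  have Ql: "Q \<longlonglongrightarrow> qs" unfolding Q_def using tendsto_fst[OF lim] l by simp
  have Pl: "P \<longlonglongrightarrow> ps" unfolding P_def using tendsto_snd[OF lim] l by simp
  have Qi: "(\<lambda>n. Q n $ i) \<longlonglongrightarrow> qs $ i" for i by (rule tendsto_vec_nth[OF Ql])
  have Pi: "(\<lambda>n. P n $ i) \<longlonglongrightarrow> ps $ i" for i by (rule tendsto_vec_nth[OF Pl])
  have qsS: "qs \<in> std_simplex"
    using closed_simplex[unfolded closed_sequential_limits] KQ(1) Ql by blast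
  have psS: "ps \<in> std_simplex"
    using closed_simplex[unfolded closed_sequential_limits] KQ(2) Pl by blast
  have "(\<lambda>n. \<Sum>i\<in>UNIV. \<bar>P n$i - Q n$i\<bar>) \<longlonglongrightarrow> (\<Sum>i\<in>UNIV. \<bar>ps$i - qs$i\<bar>)"
    by (intro tendsto_intros Pi Qi)
  then have "(\<lambda>n. 2) \<longlonglongrightarrow> (\<Sum>i\<in>UNIV. \<bar>ps$i - qs$i\<bar>)" by (simp only: KQ(3))
  then have L1: "(\<Sum>i\<in>UNIV. \<bar>ps$i - qs$i\<bar>) = 2" by (simp add: LIMSEQ_const_iff)
  have near: "N (ps - qs) \<le> N (ps - \<zeta>)" if \<zeta>: "\<zeta> \<in> std_simplex" "A *v \<zeta> = A *v qs" for \<zeta>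
  proof (rule ccontr)
    assume "\<not> N (ps - qs) \<le> N (ps - \<zeta>)"
    then have lt: "N (ps - \<zeta>) < N (ps - qs)" by simp
    define Z where "Z n = Q n + (1/2) *\<^sub>R (\<zeta> - qs)" for n
    have ev1: "\<forall>\<^sub>F n in sequentially. \<forall>i. 0 \<le> Z n $ i"
    proof (rule eventually_all_finite)
      fix i
      show "\<forall>\<^sub>F n in sequentially. 0 \<le> Z n $ i"
      proof (cases "qs $ i > 0")
        case True
        then have "\<forall>\<^sub>F n in sequentially. qs $ i / 2 < Q n $ i"
          using order_tendstoD(1)[OF Qi, of "qs $ i / 2"] by simp
        then show ?thesis
        proof (rule eventually_mono)
          fix n assume "qs $ i / 2 < Q n $ i"
          then show "0 \<le> Z n $ i" using simplex_ge0[OF \<zeta>(1), of i] by (simp add: Z_def field_simps)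
        qed
      next
        case False
        then have "qs $ i = 0" using simplex_ge0[OF qsS, of i] by simp
        then show ?thesis using simplex_ge0[OF \<zeta>(1), of i] simplex_ge0[OF KQ(1)]
          by (simp add: Z_def)
      qed
    qed
    have sumZ: "(\<Sum>i\<in>UNIV. Z n $ i) = 1" for n
      using simplex_sum[OF KQ(1)[of n]] simplex_sum[OF \<zeta>(1)] simplex_sum[OF qsS]
    proof -
      have "(\<Sum>i\<in>UNIV. Z n $ i) = (\<Sum>i\<in>UNIV. Q n $ i) + (1/2) * ((\<Sum>i\<in>UNIV. \<zeta> $ i) - (\<Sum>i\<in>UNIV. qs $ i))"
        by (simp add: Z_def sum.distrib sum_subtractf sum_divide_distrib[symmetric])
      then show ?thesis using simplex_sum[OF KQ(1)[of n]] simplex_sum[OF \<zeta>(1)] simplex_sum[OF qsS] by simp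
    qed
    have AZ: "A *v Z n = A *v Q n" for n using \<zeta>(2) by (simp add: Z_def algebra_simps)
    have l1: "(\<lambda>n. N (P n - Z n) - N (P n - Q n)) \<longlonglongrightarrow> N (ps - (qs + (1/2) *\<^sub>R (\<zeta> - qs))) - N (ps - qs)"
      unfolding Z_def by (intro tendsto_intros isn_tendsto[OF N] Pl Ql)
    have "N (ps - (qs + (1/2) *\<^sub>R (\<zeta> - qs))) = N ((1/2) *\<^sub>R (ps - qs) + (1/2) *\<^sub>R (ps - \<zeta>))"
      by (rule arg_cong[where f=N]) (simp add: vec_eq_iff field_simps)
    also have "\<dots> \<le> N ((1/2) *\<^sub>R (ps - qs)) + N ((1/2) *\<^sub>R (ps - \<zeta>))" by (rule isn_tri[OF N])
    also have "\<dots> = (1/2) * N (ps - qs) + (1/2) * N (ps - \<zeta>)" by (simp add: isn_scale[OF N])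
    also have "\<dots> < N (ps - qs)" using lt by simp
    finally have "N (ps - (qs + (1/2) *\<^sub>R (\<zeta> - qs))) - N (ps - qs) < 0" by simp
    then have ev2: "\<forall>\<^sub>F n in sequentially. N (P n - Z n) - N (P n - Q n) < 0"
      using order_tendstoD(2)[OF l1] by blast
    obtain n where n: "\<forall>i. 0 \<le> Z n $ i" "N (P n - Z n) - N (P n - Q n) < 0"
      using eventually_happens'[OF _ eventually_conj[OF ev1 ev2]] by auto
    have "Z n \<in> std_simplex" using n(1) sumZ by (simp add: std_simplex_def)
    then have "N (P n - Q n) \<le> N (P n - Z n)" using KQ(4) AZ by blast
    then show False using n(2) by simp
  qed
  show "l \<in> KK A N" unfolding l KK_def using qsS psS L1 near by auto
qed

lemma KK_compact:
  fixes A :: "real^'n^'m"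
  assumes N: "is_norm N"
  shows "compact (KK A N)"
proof -
  have "KK A N = (std_simplex \<times> std_simplex) \<inter> KK A N" by (auto simp: KK_def)
  then show ?thesis using compact_Int_closed[OF compact_Times[OF compact_simplex compact_simplex] KK_closed[OF N]]
    by metis
qed

lemma KK_ne: assumes "(q,p) \<in> KK A N" shows "p \<noteq> q"
proof
  assume "p = q"
  moreover have "(\<Sum>i\<in>UNIV. \<bar>p$i - q$i\<bar>) = 2" using assms by (simp add: KK_def)
  ultimately show False by simp
qed



definition Mset :: "real^'n^'m \<Rightarrow> 'n set \<Rightarrow> (real^'m) set" where
  "Mset A C = {A *v \<mu> | \<mu>. \<mu> \<in> std_simplex \<and> (\<forall>i. i \<notin> C \<longrightarrow> \<mu>$i = 0)}"

lemma axis_simplex: "axis i (1::real) \<in> std_simplex"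
proof -
  have "(\<Sum>k\<in>UNIV. axis i (1::real) $ k) = 1"
    by (simp add: axis_def sum.delta)
  then show ?thesis by (simp add: std_simplex_def axis_def)
qed

lemma Av_sum: "A *v \<mu> = (\<Sum>i\<in>UNIV. (\<mu>$i) *\<^sub>R column i A)"
  by (simp add: matrix_mult_sum scalar_mult_eq_scaleR)

lemma convex_Mset: "convex (Mset A C)"
  unfolding convex_def Mset_def
proof (intro ballI allI impI)
  fix x y and a b :: real
  assume x: "x \<in> {A *v \<mu> |\<mu>. \<mu> \<in> std_simplex \<and> (\<forall>i. i \<notin> C \<longrightarrow> \<mu> $ i = 0)}"
    and y: "y \<in> {A *v \<mu> |\<mu>. \<mu> \<in> std_simplex \<and> (\<forall>i. i \<notin> C \<longrightarrow> \<mu> $ i = 0)}"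
    and ab0: "0 \<le> a" "0 \<le> b" and ab1: "a + b = 1"
  obtain \<mu>1 where m1: "x = A *v \<mu>1" "\<mu>1 \<in> std_simplex" "\<forall>i. i \<notin> C \<longrightarrow> \<mu>1 $ i = 0" using x by auto
  obtain \<mu>2 where m2: "y = A *v \<mu>2" "\<mu>2 \<in> std_simplex" "\<forall>i. i \<notin> C \<longrightarrow> \<mu>2 $ i = 0" using y by auto
  have "a *\<^sub>R \<mu>1 + b *\<^sub>R \<mu>2 \<in> std_simplex"
    using m1(2) m2(2) ab0 ab1
    by (simp add: std_simplex_def sum.distrib sum_distrib_left[symmetric])
  moreover have "a *\<^sub>R x + b *\<^sub>R y = A *v (a *\<^sub>R \<mu>1 + b *\<^sub>R \<mu>2)"
    using m1(1) m2(1) by (simp add: algebra_simps)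
  moreover have "\<forall>i. i \<notin> C \<longrightarrow> (a *\<^sub>R \<mu>1 + b *\<^sub>R \<mu>2) $ i = 0" using m1(3) m2(3) by simp
  ultimately show "a *\<^sub>R x + b *\<^sub>R y \<in> {A *v \<mu> |\<mu>. \<mu> \<in> std_simplex \<and> (\<forall>i. i \<notin> C \<longrightarrow> \<mu> $ i = 0)}"
    by blast
qed

lemma hull_cols: "convex hull ((\<lambda>i. column i A) ` C) = Mset A C"
proof
  show "convex hull ((\<lambda>i. column i A) ` C) \<subseteq> Mset A C"
  proof (rule hull_minimal)
    show "convex (Mset A C)" by (rule convex_Mset)
    show "(\<lambda>i. column i A) ` C \<subseteq> Mset A C"
    proof
      fix y assume "y \<in> (\<lambda>i. column i A) ` C"
      then obtain i where i: "i \<in> C" "y = column i A" by auto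
      have "y = A *v axis i 1" using i by (simp add: matrix_vector_mult_basis)
      moreover have "\<forall>k. k \<notin> C \<longrightarrow> axis i (1::real) $ k = 0" using i by (auto simp: axis_def)
      ultimately show "y \<in> Mset A C" unfolding Mset_def using axis_simplex by blast
    qed
  qed
  show "Mset A C \<subseteq> convex hull ((\<lambda>i. column i A) ` C)"
  proof
    fix y assume "y \<in> Mset A C"
    then obtain \<mu> where m: "y = A *v \<mu>" "\<mu> \<in> std_simplex" "\<forall>i. i \<notin> C \<longrightarrow> \<mu> $ i = 0"
      unfolding Mset_def by auto
    have "y = (\<Sum>i\<in>UNIV. (\<mu>$i) *\<^sub>R column i A)" using m(1) Av_sum by simp
    also have "\<dots> = (\<Sum>i\<in>C. (\<mu>$i) *\<^sub>R column i A)"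
      by (rule sum.mono_neutral_right) (use m(3) in auto)
    finally have y: "y = (\<Sum>i\<in>C. (\<mu>$i) *\<^sub>R column i A)" .
    have s1: "(\<Sum>i\<in>C. \<mu>$i) = 1"
    proof -
      have "(\<Sum>i\<in>C. \<mu>$i) = (\<Sum>i\<in>UNIV. \<mu>$i)"
        by (rule sum.mono_neutral_left) (use m(3) in auto)
      then show ?thesis using simplex_sum[OF m(2)] by simp
    qed
    show "y \<in> convex hull ((\<lambda>i. column i A) ` C)" unfolding y
      by (rule convex_sum) (use s1 simplex_ge0[OF m(2)] in \<open>auto intro: hull_inc\<close>)
  qed
qed

lemma convA_Mset: "convA A = Mset A UNIV"
  by (auto simp: convA_def Mset_def)

lemma convA_hull: "convA A = convex hull (range (\<lambda>i. column i A))"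
  using hull_cols[of A UNIV] convA_Mset by simp

lemma col_convA: "column j A \<in> convA A"
  unfolding convA_def using axis_simplex[of j] matrix_vector_mult_basis[of A j] by (metis image_eqI)



lemma Mset_face:
  fixes A :: "real^'n^'m"
  assumes mb: "mb \<in> std_simplex" "A *v mb = qv" "\<And>i. i \<in> C \<Longrightarrow> mb$i > 0" "\<And>i. i \<notin> C \<Longrightarrow> mb$i = 0"
    and Cdef: "\<And>i. i \<in> C \<longleftrightarrow> (\<exists>\<mu>\<in>std_simplex. \<mu>$i > 0 \<and> A *v \<mu> = qv)"
    and Cne: "C \<noteq> {}"
  shows "\<And>\<gamma> i. \<gamma> \<in> std_simplex \<Longrightarrow> A *v \<gamma> \<in> Mset A C \<Longrightarrow> \<gamma>$i > 0 \<Longrightarrow> i \<in> C"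
    and "Mset A C face_of convA A"
proof -
  show core: "i \<in> C" if g: "\<gamma> \<in> std_simplex" "A *v \<gamma> \<in> Mset A C" "\<gamma>$i > 0" for \<gamma> i
  proof -
    obtain \<gamma>' where g': "A *v \<gamma> = A *v \<gamma>'" "\<gamma>' \<in> std_simplex" "\<forall>i. i \<notin> C \<longrightarrow> \<gamma>' $ i = 0"
      using g(2) unfolding Mset_def by auto
    define t where "t = Min ((\<lambda>i. mb$i) ` C)"
    have tpos: "t > 0" unfolding t_def using Cne mb(3) by (subst Min_gr_iff) auto
    have tle: "t \<le> mb$k" if "k \<in> C" for k unfolding t_def using that by (intro Min_le) auto
    define \<nu> where "\<nu> = mb - t *\<^sub>R \<gamma>' + t *\<^sub>R \<gamma>"
    have "\<nu> \<in> std_simplex"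
    proof -
      have "0 \<le> \<nu>$k" for k
      proof (cases "k \<in> C")
        case True
        have "t * \<gamma>'$k \<le> t * 1" using simplex_le1[OF g'(2)] tpos by (intro mult_left_mono) auto
        moreover have "t * \<gamma>$k \<ge> 0" using simplex_ge0[OF g(1), of k] tpos by simp
        moreover have "\<nu>$k = mb$k - t * \<gamma>'$k + t * \<gamma>$k" by (simp add: \<nu>_def)
        ultimately show ?thesis using tle[OF True] by linarith
      next
        case False
        moreover have "\<nu>$k = mb$k - t * \<gamma>'$k + t * \<gamma>$k" by (simp add: \<nu>_def)
        moreover have "t * \<gamma>$k \<ge> 0" using simplex_ge0[OF g(1), of k] tpos by simp
        ultimately show ?thesis using mb(4) g'(3) by simp
      qed
      moreover have "(\<Sum>k\<in>UNIV. \<nu>$k) = 1"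
      proof -
        have "(\<Sum>k\<in>UNIV. \<nu>$k) = (\<Sum>k\<in>UNIV. mb$k) - t * (\<Sum>k\<in>UNIV. \<gamma>'$k) + t * (\<Sum>k\<in>UNIV. \<gamma>$k)"
          by (simp add: \<nu>_def sum.distrib sum_subtractf sum_distrib_left)
        then show ?thesis using simplex_sum[OF mb(1)] simplex_sum[OF g(1)] simplex_sum[OF g'(2)] by simp
      qed
      ultimately show ?thesis by (simp add: std_simplex_def)
    qed
    moreover have "A *v \<nu> = qv" using mb(2) g'(1) by (simp add: \<nu>_def algebra_simps)
    moreover have "\<nu>$i > 0"
    proof -
      have "mb$i - t * \<gamma>'$i \<ge> 0"
      proof (cases "i \<in> C")
        case True
        have "t * \<gamma>'$i \<le> t * 1" using simplex_le1[OF g'(2)] tpos by (intro mult_left_mono) auto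
        then show ?thesis using tle[OF True] by simp
      next
        case False then show ?thesis using mb(4) g'(3) by simp
      qed
      moreover have "\<nu>$i = mb$i - t * \<gamma>'$i + t * \<gamma>$i" by (simp add: \<nu>_def)
      moreover have "t * \<gamma>$i > 0" using g(3) tpos by simp
      ultimately show ?thesis by linarith
    qed
    ultimately show "i \<in> C" using Cdef by blast
  qed
  show "Mset A C face_of convA A"
    unfolding face_of_def
  proof (intro conjI ballI impI)
    show "Mset A C \<subseteq> convA A" by (auto simp: Mset_def convA_def)
    show "convex (Mset A C)" by (rule convex_Mset)
    fix a b y assume a: "a \<in> convA A" and b: "b \<in> convA A" and y: "y \<in> Mset A C"
      and seg: "y \<in> open_segment a b"
    obtain \<alpha> where al: "\<alpha> \<in> std_simplex" "a = A *v \<alpha>" using a by (auto simp: convA_def)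
    obtain \<beta> where be: "\<beta> \<in> std_simplex" "b = A *v \<beta>" using b by (auto simp: convA_def)
    obtain s where s: "0 < s" "s < 1" "y = (1 - s) *\<^sub>R a + s *\<^sub>R b" using seg by (auto simp: in_segment)
    define \<gamma> where "\<gamma> = (1 - s) *\<^sub>R \<alpha> + s *\<^sub>R \<beta>"
    have gs: "\<gamma> \<in> std_simplex"
    proof -
      have "(\<Sum>k\<in>UNIV. \<gamma>$k) = (1 - s) * (\<Sum>k\<in>UNIV. \<alpha>$k) + s * (\<Sum>k\<in>UNIV. \<beta>$k)"
        by (simp add: \<gamma>_def sum.distrib sum_distrib_left)
      moreover have "0 \<le> \<gamma>$k" for k using simplex_ge0[OF al(1), of k] simplex_ge0[OF be(1), of k] s(1,2)
        by (simp add: \<gamma>_def)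
      ultimately show ?thesis using simplex_sum[OF al(1)] simplex_sum[OF be(1)] by (simp add: std_simplex_def)
    qed
    have gy: "A *v \<gamma> = y" using al(2) be(2) s(3) by (simp add: \<gamma>_def algebra_simps)
    have suppa: "\<alpha>$i = 0" if "i \<notin> C" for i
    proof (rule ccontr)
      assume "\<alpha>$i \<noteq> 0"
      then have "\<alpha>$i > 0" using simplex_ge0[OF al(1), of i] by simp
      then have "(1 - s) * \<alpha>$i > 0" using s(2) by simp
      moreover have "s * \<beta>$i \<ge> 0" using s(1) simplex_ge0[OF be(1), of i] by simp
      moreover have "\<gamma>$i = (1 - s) * \<alpha>$i + s * \<beta>$i" by (simp add: \<gamma>_def)
      ultimately have "\<gamma>$i > 0" by linarith
      then show False using core[OF gs] gy y that by blast
    qed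
    have suppb: "\<beta>$i = 0" if "i \<notin> C" for i
    proof (rule ccontr)
      assume "\<beta>$i \<noteq> 0"
      then have "\<beta>$i > 0" using simplex_ge0[OF be(1), of i] by simp
      then have "s * \<beta>$i > 0" using s(1) by simp
      moreover have "(1 - s) * \<alpha>$i \<ge> 0" using s(2) simplex_ge0[OF al(1), of i] by simp
      moreover have "\<gamma>$i = (1 - s) * \<alpha>$i + s * \<beta>$i" by (simp add: \<gamma>_def)
      ultimately have "\<gamma>$i > 0" by linarith
      then show False using core[OF gs] gy y that by blast
    qed
    show "a \<in> Mset A C" using al suppa unfolding Mset_def by blast
    show "b \<in> Mset A C" using be suppb unfolding Mset_def by blast
  qed
qed



lemma setdist_nonneg:
  assumes N: "is_norm N" and "F \<noteq> {}" "G \<noteq> {}"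
  shows "0 \<le> setdistN N F G"
  unfolding setdistN_def using assms by (intro cInf_greatest) (auto simp: isn_ge0[OF N])

lemma facial_le:
  fixes A :: "real^'n^'m"
  assumes N: "is_norm N" and F: "F face_of convA A" "F \<noteq> {}" "F \<noteq> convA A"
    and a: "a \<in> F" and b: "b \<in> convex hull {column i A | i. column i A \<notin> F}"
  shows "facial_distance N A \<le> N (a - b)"
proof -
  let ?H = "\<lambda>F. convex hull {column i A | i. column i A \<notin> F}"
  have Hne: "?H F' \<noteq> {}" if "F' face_of convA A" "F' \<noteq> convA A" for F'
  proof
    assume "?H F' = {}"
    then have "\<forall>i. column i A \<in> F'" by auto
    then have "convex hull (range (\<lambda>i. column i A)) \<subseteq> F'"
      using face_of_imp_convex[OF that(1)] by (intro hull_minimal) auto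
    then show False using convA_hull[of A] face_of_imp_subset[OF that(1)] that(2) by auto
  qed
  have "facial_distance N A \<le> setdistN N F (?H F)"
    unfolding facial_distance_def
  proof (rule cInf_lower)
    show "setdistN N F (?H F) \<in> {setdistN N F (?H F) |F. F face_of convA A \<and> F \<noteq> {} \<and> F \<noteq> convA A}"
      using F by blast
    show "bdd_below {setdistN N F (?H F) |F. F face_of convA A \<and> F \<noteq> {} \<and> F \<noteq> convA A}"
      by (rule bdd_belowI[of _ 0]) (use setdist_nonneg[OF N] Hne in blast)
  qed
  also have "setdistN N F (?H F) \<le> N (a - b)"
    unfolding setdistN_def
  proof (rule cInf_lower)
    show "N (a - b) \<in> {N (u - w) |u w. u \<in> F \<and> w \<in> ?H F}" using a b by blast
    show "bdd_below {N (u - w) |u w. u \<in> F \<and> w \<in> ?H F}"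
      by (rule bdd_belowI[of _ 0]) (auto simp: isn_ge0[OF N])
  qed
  finally show ?thesis .
qed

lemma Max_axis:
  assumes N: "is_norm (N :: real^'n \<Rightarrow> real)"
  shows "N (axis i 1) \<le> Max (range (\<lambda>i. N (axis i 1)))" "Max (range (\<lambda>i. N (axis i 1))) > 0"
proof -
  show 1: "N (axis i 1) \<le> Max (range (\<lambda>i. N (axis i 1)))" by (rule Max_ge) auto
  have "N (axis i 1) > 0" using isn_pos[OF N] by (simp add: axis_eq_0_iff)
  then show "Max (range (\<lambda>i. N (axis i 1))) > 0" using 1 by linarith
qed

lemma simplex_norm_le:
  assumes N: "is_norm (N :: real^'n \<Rightarrow> real)" and p: "p \<in> std_simplex"
  shows "N p \<le> Max (range (\<lambda>i. N (axis i 1)))"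
proof -
  let ?M = "Max (range (\<lambda>i. N (axis i 1)))"
  have "N p \<le> (\<Sum>i\<in>UNIV. \<bar>p$i\<bar> * N (axis i 1))" by (rule isn_vec_bound[OF N])
  also have "\<dots> \<le> (\<Sum>i\<in>UNIV. p$i * ?M)"
    using simplex_ge0[OF p] Max_axis(1)[OF N] by (intro sum_mono) (simp add: mult_left_mono)
  also have "\<dots> = ?M" using simplex_sum[OF p] by (simp add: sum_distrib_right[symmetric])
  finally show ?thesis .
qed



lemma facial_bound:
  fixes A :: "real^'n^'m"
  assumes Nn: "is_norm Nn" and Nm: "is_norm Nm" and u: "u \<in> convA A"
    and x: "x \<in> std_simplex" and xZ: "x \<notin> Zset A u"
  shows "facial_distance Nm A / Max (range (\<lambda>i. Nn (axis i 1)))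
          \<le> 2 * Nm (A *v x - u) / distN Nn x (Zset A u)"
proof -
  let ?M = "Max (range (\<lambda>i. Nn (axis i 1)))"
  define f where "f z = (\<Sum>i\<in>UNIV. min (x$i) (z$i))" for z :: "real^'n"
  have "continuous_on (Zset A u) f" unfolding f_def by (intro continuous_intros)
  then obtain z where z: "z \<in> Zset A u" and zmax: "\<And>z'. z' \<in> Zset A u \<Longrightarrow> f z' \<le> f z"
    using continuous_attains_sup[OF compact_Zset Zset_ne[OF u]] by blast
  have zs: "z \<in> std_simplex" and Az: "A *v z = u" using z by (auto simp: Zset_def)
  have xz: "x \<noteq> z" using z xZ by auto
  define w where "w = x - z"
  define l where "l = (\<Sum>i\<in>UNIV. pp w $ i)"
  define p where "p = (1/l) *\<^sub>R pp w"
  define q where "q = (1/l) *\<^sub>R nn w"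
  note D = diff_decomp[OF x zs xz, folded w_def, folded l_def, folded p_def q_def]
  have lpos: "l > 0" by (rule D(1))
  have qs: "q \<in> std_simplex" and ps: "p \<in> std_simplex" using D(4,5) by auto
  have xzpq: "x - z = l *\<^sub>R (p - q)" using D(7) by (simp add: w_def)
  define qv where "qv = A *v q"
  define C where "C = {i. \<exists>\<mu>\<in>std_simplex. \<mu>$i > 0 \<and> A *v \<mu> = qv}"
  have Cdef: "i \<in> C \<longleftrightarrow> (\<exists>\<mu>\<in>std_simplex. \<mu>$i > 0 \<and> A *v \<mu> = qv)" for i by (simp add: C_def)
  have wit_zero: "\<mu>$k = 0" if "\<mu> \<in> std_simplex" "A *v \<mu> = qv" "k \<notin> C" for \<mu> k
    using that simplex_ge0[OF that(1), of k] unfolding C_def by force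
  have Cne: "C \<noteq> {}"
  proof -
    obtain k where "q$k \<noteq> 0" using simplex_sum[OF qs] by (metis (mono_tags) sum.neutral zero_neq_one)
    then have "q$k > 0" using simplex_ge0[OF qs, of k] by simp
    then have "k \<in> C" using qs unfolding C_def qv_def by blast
    then show ?thesis by blast
  qed
  obtain wit where wit: "\<And>i. i \<in> C \<Longrightarrow> wit i \<in> std_simplex \<and> wit i $ i > 0 \<and> A *v wit i = qv"
    using Cdef by metis
  define mb where "mb = (1 / real (card C)) *\<^sub>R (\<Sum>i\<in>C. wit i)"
  have cardC: "real (card C) > 0" using Cne by (simp add: card_gt_0_iff)
  have mb1: "mb \<in> std_simplex"
  proof -
    have "0 \<le> mb$k" for k
    proof -
      have "0 \<le> (\<Sum>j\<in>C. wit j $ k)" using wit simplex_ge0 by (intro sum_nonneg) auto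
      then show ?thesis by (simp add: mb_def)
    qed
    moreover have "(\<Sum>k\<in>UNIV. mb$k) = 1"
    proof -
      have "(\<Sum>k\<in>UNIV. mb$k) = (1 / real (card C)) * (\<Sum>i\<in>C. (\<Sum>k\<in>UNIV. wit i $ k))"
        by (simp add: mb_def sum_distrib_left sum.swap[of _ UNIV C])
      also have "\<dots> = (1 / real (card C)) * (\<Sum>i\<in>C. 1)"
      proof -
        have "(\<Sum>i\<in>C. (\<Sum>k\<in>UNIV. wit i $ k)) = (\<Sum>i\<in>C. 1)"
          by (rule sum.cong) (use wit simplex_sum in auto)
        then show ?thesis by simp
      qed
      also have "\<dots> = 1" using cardC Cne by simp
      finally show ?thesis .
    qed
    ultimately show ?thesis by (simp add: std_simplex_def)
  qed
  have mb2: "A *v mb = qv"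
  proof -
    have "A *v mb = (1 / real (card C)) *\<^sub>R (\<Sum>i\<in>C. A *v wit i)"
      by (simp add: mb_def matrix_vector_mult_scaleR linear_sum[OF matrix_vector_mul_linear])
    also have "\<dots> = (1 / real (card C)) *\<^sub>R (\<Sum>i\<in>C. qv)" using wit by simp
    also have "\<dots> = qv" using cardC Cne by (simp only: sum_constant_scaleR scaleR_scaleR) simp
    finally show ?thesis .
  qed
  have mb3: "mb$i > 0" if "i \<in> C" for i
  proof -
    have "wit i $ i \<le> (\<Sum>j\<in>C. wit j $ i)"
      using that wit simplex_ge0 by (intro member_le_sum) auto
    moreover have "mb$i = (1 / real (card C)) * (\<Sum>j\<in>C. wit j $ i)" by (simp add: mb_def)
    ultimately show ?thesis using wit[OF that] cardC
      by (smt (verit) divide_pos_pos mult_pos_pos)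
  qed
  have mb4: "mb$i = 0" if "i \<notin> C" for i
    using wit_zero[OF _ _ that] wit by (simp add: mb_def)
  note MF = Mset_face[OF mb1 mb2 mb3 mb4 Cdef Cne]
  define G where "G = Mset A C"
  have Gface: "G face_of convA A" using MF(2) by (simp add: G_def)
  have qvG: "qv \<in> G"
  proof -
    have "\<forall>i. i \<notin> C \<longrightarrow> q$i = 0" using wit_zero[OF qs] by (simp add: qv_def)
    then show ?thesis unfolding G_def Mset_def qv_def using qs by blast
  qed
  have colnot: "column j A \<notin> G" if j: "pp w $ j > 0" for j
  proof
    assume "column j A \<in> G"
    then have "A *v axis j 1 \<in> Mset A C" by (simp add: G_def matrix_vector_mult_basis)
    then have "j \<in> C" using MF(1)[where \<gamma>="axis j 1" and i=j] axis_simplex[of j] by auto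
    then obtain \<nu> where nu: "\<nu> \<in> std_simplex" "\<nu>$j > 0" "A *v \<nu> = qv" unfolding C_def by blast
    define z' where "z' = z - nn w + l *\<^sub>R \<nu>"
    have "z' \<in> std_simplex"
    proof -
      have "\<forall>i. 0 \<le> z' $ i" using D(3) simplex_ge0[OF nu(1)] lpos by (simp add: z'_def)
      moreover have "(\<Sum>i\<in>UNIV. z' $ i) = 1"
        using simplex_sum[OF zs] simplex_sum[OF nu(1)] D(2)
        by (simp add: z'_def sum.distrib sum_subtractf sum_distrib_left[symmetric])
      ultimately show ?thesis by (simp add: std_simplex_def)
    qed
    moreover have "A *v z' = u"
    proof -
      have "A *v nn w = l *\<^sub>R (A *v q)" using lpos by (simp add: q_def matrix_vector_mult_scaleR)
      then show ?thesis using nu(3) Az by (simp add: z'_def algebra_simps qv_def)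
    qed
    ultimately have "z' \<in> Zset A u" by (simp add: Zset_def)
    then have le: "f z' \<le> f z" by (rule zmax)
    have "f z < f z'" unfolding f_def
    proof (rule sum_strict_mono_ex1)
      have z'i: "z' $ i = min (x$i) (z$i) + l * \<nu>$i" for i
        by (simp add: z'_def w_def nn_def min_def max_def)
      show "\<forall>i\<in>UNIV. min (x $ i) (z $ i) \<le> min (x $ i) (z' $ i)"
        using z'i simplex_ge0[OF nu(1)] lpos by (simp add: min_def)
      have "x$j > z$j" using j by (simp add: w_def pp_def max_def split: if_splits)
      moreover have "l * \<nu>$j > 0" using lpos nu(2) by simp
      ultimately have "min (x $ j) (z $ j) < min (x $ j) (z' $ j)" using z'i[of j] by (simp add: min_def)
      then show "\<exists>i\<in>UNIV. min (x $ i) (z $ i) < min (x $ i) (z' $ i)" by blast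
    qed simp
    then show False using le by simp
  qed
  have Gne: "G \<noteq> {}" using qvG by blast
  obtain j where j: "pp w $ j > 0"
  proof -
    have "\<exists>j. pp w $ j \<noteq> 0" using lpos unfolding l_def by (metis (mono_tags) less_irrefl sum.neutral)
    then show ?thesis using that pp_ge0 by (metis less_eq_real_def)
  qed
  have GnA: "G \<noteq> convA A" using colnot[OF j] col_convA[of j A] by blast
  define pv where "pv = A *v p"
  have pvH: "pv \<in> convex hull {column i A | i. column i A \<notin> G}"
  proof -
    have eq: "{column i A | i. column i A \<notin> G} = (\<lambda>i. column i A) ` {i. column i A \<notin> G}" by auto
    have "\<forall>i. i \<notin> {i. column i A \<notin> G} \<longrightarrow> p$i = 0"
    proof (intro allI impI)
      fix i assume "i \<notin> {i. column i A \<notin> G}"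
      then have "\<not> pp w $ i > 0" using colnot by blast
      then show "p$i = 0" using pp_ge0[of w i] by (simp add: p_def)
    qed
    then show ?thesis unfolding eq hull_cols Mset_def pv_def using ps by blast
  qed
  have Phi: "facial_distance Nm A \<le> Nm (qv - pv)"
    by (rule facial_le[OF Nm Gface Gne GnA qvG pvH])
  obtain z0 where "z0 \<in> Zset A u" "distN Nn x (Zset A u) = Nn (x - z0)"
    "\<And>z'. z' \<in> Zset A u \<Longrightarrow> Nn (x - z0) \<le> Nn (x - z')" "x \<noteq> z0" "distN Nn x (Zset A u) > 0"
    using dist_pos[OF Nn u xZ] by blast
  then have Dpos: "distN Nn x (Zset A u) > 0" and Dle: "distN Nn x (Zset A u) \<le> Nn (x - z)"
    using z by auto
  have "Nn (x - z) = l * Nn (p - q)" using xzpq isn_scale[OF Nn] lpos by simp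
  also have "\<dots> \<le> l * (Nn p + Nn q)"
    using isn_tri[OF Nn, of p "- q"] isn_minus[OF Nn, of q] lpos by (intro mult_left_mono) auto
  also have "\<dots> \<le> l * (2 * ?M)"
    using simplex_norm_le[OF Nn ps] simplex_norm_le[OF Nn qs] lpos by (intro mult_left_mono) auto
  finally have Dle2: "distN Nn x (Zset A u) \<le> 2 * l * ?M" using Dle by simp
  have Axu: "Nm (A *v x - u) = l * Nm (qv - pv)"
  proof -
    have "A *v x - u = A *v (x - z)" using Az by (simp add: algebra_simps)
    also have "\<dots> = l *\<^sub>R (pv - qv)" unfolding xzpq by (simp add: pv_def qv_def algebra_simps)
    finally have "Nm (A *v x - u) = l * Nm (pv - qv)" using isn_scale[OF Nm] lpos by simp
    then show ?thesis using isn_commute[OF Nm] by simp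
  qed
  have M0: "?M > 0" by (rule Max_axis(2)[OF Nn])
  let ?c = "Nm (qv - pv)"
  have c0: "?c \<ge> 0" by (rule isn_ge0[OF Nm])
  have "facial_distance Nm A / ?M \<le> ?c / ?M" using Phi M0 by (simp add: divide_right_mono)
  also have "\<dots> = 2 * (l * ?c) / (2 * l * ?M)" using lpos by simp
  also have "\<dots> \<le> 2 * (l * ?c) / distN Nn x (Zset A u)"
    using Dpos Dle2 c0 lpos by (intro divide_left_mono) auto
  finally show ?thesis using Axu by simp
qed



lemma ratio_repr:
  fixes A :: "real^'n^'m"
  assumes Nn: "is_norm Nn" and Nm: "is_norm Nm" and u: "u \<in> convA A"
    and x: "x \<in> std_simplex" and xZ: "x \<notin> Zset A u"
  obtains q p where "(q,p) \<in> KK A Nn"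
    "Nm (A *v x - u) / distN Nn x (Zset A u) = Nm (A *v (p - q)) / Nn (p - q)"
proof -
  obtain z where z: "z \<in> Zset A u" "distN Nn x (Zset A u) = Nn (x - z)"
    "\<And>z'. z' \<in> Zset A u \<Longrightarrow> Nn (x - z) \<le> Nn (x - z')" "x \<noteq> z"
    using dist_pos[OF Nn u xZ] by blast
  obtain l q p where r: "l > 0" "(q,p) \<in> KK A Nn" "x - z = l *\<^sub>R (p - q)"
    using reduction[OF Nn u x z(1) z(4) z(3)] by blast
  have Az: "A *v z = u" using z(1) by (simp add: Zset_def)
  have "A *v x - u = A *v (x - z)" using Az by (simp add: algebra_simps)
  also have "\<dots> = l *\<^sub>R (A *v (p - q))" unfolding r(3) by (simp add: matrix_vector_mult_scaleR)
  finally have "Nm (A *v x - u) = l * Nm (A *v (p - q))" using isn_scale[OF Nm] r(1) by simp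
  moreover have "distN Nn x (Zset A u) = l * Nn (p - q)" using z(2) r(3) isn_scale[OF Nn] r(1) by simp
  ultimately have "Nm (A *v x - u) / distN Nn x (Zset A u) = Nm (A *v (p - q)) / Nn (p - q)"
    using r(1) by simp
  then show ?thesis using that r(2) by blast
qed

lemma KK_repr:
  fixes A :: "real^'n^'m"
  assumes Nn: "is_norm Nn" and K: "(q,p) \<in> KK A Nn"
  shows "A *v q \<in> convA A" "p \<in> std_simplex" "p \<notin> Zset A (A *v q)"
    "distN Nn p (Zset A (A *v q)) = Nn (p - q)"
proof -
  have qs: "q \<in> std_simplex" and ps: "p \<in> std_simplex"
    and near: "\<And>\<zeta>. \<zeta>\<in>std_simplex \<Longrightarrow> A *v \<zeta> = A *v q \<Longrightarrow> Nn (p - q) \<le> Nn (p - \<zeta>)"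
    using K by (auto simp: KK_def)
  show "A *v q \<in> convA A" using qs by (simp add: convA_def)
  show "p \<in> std_simplex" by (rule ps)
  show "p \<notin> Zset A (A *v q)"
  proof
    assume "p \<in> Zset A (A *v q)"
    then have "Nn (p - q) \<le> Nn (p - p)" using near[OF ps] by (simp add: Zset_def)
    then have "Nn (p - q) \<le> 0" using isn_0[OF Nn] by simp
    then have "p - q = 0" using isn_pos[OF Nn, of "p - q"] by force
    then show False using KK_ne[OF K] by simp
  qed
  show "distN Nn p (Zset A (A *v q)) = Nn (p - q)"
    unfolding distN_def by (rule cInf_eq_minimum) (use qs near in \<open>auto simp: Zset_def\<close>)
qed

lemma ratio_scale:
  fixes A :: "real^'n^'m"
  assumes Nn: "is_norm Nn" and Nm: "is_norm Nm" and c: "c \<noteq> 0"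
  shows "Nm (A *v (c *\<^sub>R w)) / Nn (c *\<^sub>R w) = Nm (A *v w) / Nn w"
  using c by (simp add: matrix_vector_mult_scaleR isn_scale[OF Nn] isn_scale[OF Nm])

lemma l1_pos: "(w::real^'n) \<noteq> 0 \<Longrightarrow> (\<Sum>i\<in>UNIV. \<bar>w$i\<bar>) > 0"
proof -
  assume "w \<noteq> 0"
  then obtain k where "w$k \<noteq> 0" by (metis vec_eq_iff zero_index)
  then have "\<bar>w$k\<bar> > 0" by simp
  moreover have "\<bar>w$k\<bar> \<le> (\<Sum>i\<in>UNIV. \<bar>w$i\<bar>)" by (rule member_le_sum) auto
  ultimately show ?thesis by linarith
qed



theorem proposition2:
  fixes A :: "real^'n^'m" and Nn :: "real^'n \<Rightarrow> real" and Nm :: "real^'m \<Rightarrow> real"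
  assumes "is_norm Nn" and "is_norm Nm"
    and "\<exists>i j. column i A \<noteq> column j A"
  shows "(\<exists>v. is_max {Nm (A *v w) / Nn w | w. w \<noteq> 0 \<and> (\<Sum>i\<in>UNIV. w $ i) = 0} v
           \<and> is_max {Nm (A *v x - u) / distN Nn x (Zset A u) | u x.
                       u \<in> convA A \<and> x \<in> std_simplex - Zset A u} v)
         \<and> (\<exists>\<mu>. is_min {2 * Nm (A *v x - u) / distN Nn x (Zset A u) | u x.
                       u \<in> convA A \<and> x \<in> std_simplex - Zset A u} \<mu>
           \<and> facial_distance Nm A / Max (range (\<lambda>i. Nn (axis i 1))) \<le> \<mu>)"
proof -
  note Nn = assms(1) and Nm = assms(2)
  obtain i0 j0 where ij: "column i0 A \<noteq> column j0 A" using assms(3) by blast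
  define g where "g w = Nm (A *v w) / Nn w" for w :: "real^'n"
  define S1 where "S1 = {Nm (A *v w) / Nn w | w. w \<noteq> 0 \<and> (\<Sum>i\<in>UNIV. w $ i) = 0}"
  define S3 where "S3 = {Nm (A *v x - u) / distN Nn x (Zset A u) | u x.
                       u \<in> convA A \<and> x \<in> std_simplex - Zset A u}"
  define S2 where "S2 = {2 * Nm (A *v x - u) / distN Nn x (Zset A u) | u x.
                       u \<in> convA A \<and> x \<in> std_simplex - Zset A u}"
  define W where "W = {w::real^'n. (\<Sum>i\<in>UNIV. \<bar>w$i\<bar>) = 2 \<and> (\<Sum>i\<in>UNIV. w$i) = 0}"
  have Wne0: "w \<noteq> 0" if "w \<in> W" for w using that by (auto simp: W_def)
  have Wscale: "(2 / (\<Sum>i\<in>UNIV. \<bar>w$i\<bar>)) *\<^sub>R w \<in> W \<and> g ((2 / (\<Sum>i\<in>UNIV. \<bar>w$i\<bar>)) *\<^sub>R w) = g w"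
    if "w \<noteq> 0" "(\<Sum>i\<in>UNIV. w$i) = 0" for w
  proof -
    have pos: "(\<Sum>i\<in>UNIV. \<bar>w$i\<bar>) > 0" using l1_pos[OF that(1)] .
    have "(\<Sum>i\<in>UNIV. \<bar>((2 / (\<Sum>i\<in>UNIV. \<bar>w$i\<bar>)) *\<^sub>R w)$i\<bar>) = 2 / (\<Sum>i\<in>UNIV. \<bar>w$i\<bar>) * (\<Sum>i\<in>UNIV. \<bar>w$i\<bar>)"
      using pos by (simp add: abs_mult sum_distrib_left)
    also have "\<dots> = 2" using pos by simp
    finally have L1: "(\<Sum>i\<in>UNIV. \<bar>((2 / (\<Sum>i\<in>UNIV. \<bar>w$i\<bar>)) *\<^sub>R w)$i\<bar>) = 2" .
    have "(\<Sum>i\<in>UNIV. ((2 / (\<Sum>i\<in>UNIV. \<bar>w$i\<bar>)) *\<^sub>R w)$i) = (2 / (\<Sum>i\<in>UNIV. \<bar>w$i\<bar>)) * (\<Sum>i\<in>UNIV. w$i)"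
      by (simp add: sum_distrib_left)
    then have "(2 / (\<Sum>i\<in>UNIV. \<bar>w$i\<bar>)) *\<^sub>R w \<in> W"
      using that(2) L1 unfolding W_def by simp
    moreover have "g ((2 / (\<Sum>i\<in>UNIV. \<bar>w$i\<bar>)) *\<^sub>R w) = g w"
      unfolding g_def using pos by (intro ratio_scale[OF Nn Nm]) simp
    ultimately show ?thesis by simp
  qed
  define e where "e = axis i0 (1::real) - axis j0 1"
  have Ae: "A *v e = column i0 A - column j0 A" by (simp add: e_def algebra_simps matrix_vector_mult_basis)
  have e0: "e \<noteq> 0" using Ae ij by auto
  have esum: "(\<Sum>i\<in>UNIV. e$i) = 0"
    using simplex_sum[OF axis_simplex[of i0]] simplex_sum[OF axis_simplex[of j0]]
    by (simp add: e_def sum_subtractf)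
  have ge: "g e > 0" unfolding g_def using Ae ij e0 isn_pos[OF Nn] isn_pos[OF Nm] by simp
  have Wc: "compact W"
  proof -
    have "closed W" unfolding W_def
      by (intro closed_Collect_conj closed_Collect_eq continuous_intros)
    moreover have "bounded W"
    proof -
      have "W \<subseteq> cball 0 2"
      proof
        fix w assume "w \<in> W"
        then have "norm w \<le> 2" using norm_le_l1_cart[of w] by (simp add: W_def)
        then show "w \<in> cball 0 2" by simp
      qed
      then show ?thesis using bounded_cball bounded_subset by blast
    qed
    ultimately show ?thesis using compact_eq_bounded_closed by blast
  qed
  have Wn: "W \<noteq> {}" using Wscale[OF e0 esum] by blast
  have gc: "continuous_on W g" unfolding g_def
  proof (rule continuous_on_divide)
    show "continuous_on W (\<lambda>w. Nm (A *v w))"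
      by (rule continuous_on_compose2[OF isn_cont[OF Nm, of UNIV]]) (auto intro!: continuous_intros)
    show "continuous_on W Nn" by (rule isn_cont[OF Nn])
    show "\<forall>w\<in>W. Nn w \<noteq> 0" using Wne0 isn_pos[OF Nn] by fastforce
  qed
  obtain ws where ws: "ws \<in> W" "\<And>w. w \<in> W \<Longrightarrow> g w \<le> g ws"
    using continuous_attains_sup[OF Wc Wn gc] by blast
  define v where "v = g ws"
  have S1le: "g w \<le> v" if "w \<noteq> 0" "(\<Sum>i\<in>UNIV. w$i) = 0" for w
    using Wscale[OF that] ws(2) unfolding v_def by metis
  have vpos: "v > 0" using S1le[OF e0 esum] ge by simp
  have vS1: "is_max S1 v"
    unfolding is_max_def S1_def
  proof
    show "v \<in> {Nm (A *v w) / Nn w |w. w \<noteq> 0 \<and> (\<Sum>i\<in>UNIV. w $ i) = 0}"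
      using ws(1) Wne0[OF ws(1)] unfolding v_def g_def W_def by blast
    show "\<forall>y\<in>{Nm (A *v w) / Nn w |w. w \<noteq> 0 \<and> (\<Sum>i\<in>UNIV. w $ i) = 0}. y \<le> v"
      using S1le unfolding g_def by blast
  qed
  have S3le: "Nm (A *v x - u) / distN Nn x (Zset A u) \<le> v"
    if u: "u \<in> convA A" and x: "x \<in> std_simplex" and xZ: "x \<notin> Zset A u" for u x
  proof -
    obtain z where z: "z \<in> Zset A u" "distN Nn x (Zset A u) = Nn (x - z)" "x \<noteq> z"
      using dist_pos[OF Nn u xZ] by blast
    have zs: "z \<in> std_simplex" and Az: "A *v z = u" using z(1) by (auto simp: Zset_def)
    have "A *v x - u = A *v (x - z)" using Az by (simp add: algebra_simps)
    moreover have "(\<Sum>i\<in>UNIV. (x - z)$i) = 0"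
      using simplex_sum[OF x] simplex_sum[OF zs] by (simp add: sum_subtractf)
    moreover have "x - z \<noteq> 0" using z(3) by simp
    ultimately show ?thesis using S1le[of "x - z"] z(2) unfolding g_def by simp
  qed
  have vS3: "is_max S3 v"
    unfolding is_max_def
  proof
    show "\<forall>y\<in>S3. y \<le> v" unfolding S3_def using S3le by blast
    define p where "p = pp ws"
    define q where "q = nn ws"
    have wpq: "ws = p - q" using pp_nn[of ws] by (simp add: p_def q_def)
    have sums: "(\<Sum>i\<in>UNIV. p$i) - (\<Sum>i\<in>UNIV. q$i) = 0" "(\<Sum>i\<in>UNIV. p$i) + (\<Sum>i\<in>UNIV. q$i) = 2"
    proof -
      have "(\<Sum>i\<in>UNIV. ws$i) = 0" using ws(1) by (simp add: W_def)
      then show "(\<Sum>i\<in>UNIV. p$i) - (\<Sum>i\<in>UNIV. q$i) = 0" unfolding wpq by (simp add: sum_subtractf)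
      have "(\<Sum>i\<in>UNIV. \<bar>ws$i\<bar>) = 2" using ws(1) by (simp add: W_def)
      then show "(\<Sum>i\<in>UNIV. p$i) + (\<Sum>i\<in>UNIV. q$i) = 2"
        unfolding abs_pp_nn by (simp add: p_def q_def sum.distrib)
    qed
    have ps: "p \<in> std_simplex" using sums by (simp add: std_simplex_def p_def pp_def)
    have qs: "q \<in> std_simplex" using sums by (simp add: std_simplex_def q_def nn_def)
    define u where "u = A *v q"
    have u: "u \<in> convA A" using qs by (simp add: u_def convA_def)
    have Aws: "A *v ws = A *v p - u" by (simp add: wpq u_def algebra_simps)
    have "g ws > 0" using vpos by (simp add: v_def)
    then have "A *v ws \<noteq> 0" unfolding g_def using isn_0[OF Nm] by auto
    then have pZ: "p \<notin> Zset A u" using Aws by (auto simp: Zset_def)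
    obtain z where z: "z \<in> Zset A u" "distN Nn p (Zset A u) = Nn (p - z)"
      "\<And>z'. z' \<in> Zset A u \<Longrightarrow> Nn (p - z) \<le> Nn (p - z')" "distN Nn p (Zset A u) > 0"
      using dist_pos[OF Nn u pZ] by blast
    have qZ: "q \<in> Zset A u" using qs by (simp add: Zset_def u_def)
    have Dle: "distN Nn p (Zset A u) \<le> Nn ws" using z(2) z(3)[OF qZ] wpq by simp
    have "v = Nm (A *v ws) / Nn ws" by (simp add: v_def g_def)
    also have "\<dots> \<le> Nm (A *v ws) / distN Nn p (Zset A u)"
      using Dle z(4) isn_ge0[OF Nm] by (intro divide_left_mono) auto
    finally have "v \<le> Nm (A *v p - u) / distN Nn p (Zset A u)" using Aws by simp
    moreover have "Nm (A *v p - u) / distN Nn p (Zset A u) \<le> v" by (rule S3le[OF u ps pZ])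
    ultimately have "v = Nm (A *v p - u) / distN Nn p (Zset A u)" by simp
    then show "v \<in> S3" unfolding S3_def using u ps pZ by blast
  qed
  define hh where "hh y = Nm (A *v (snd y - fst y)) / Nn (snd y - fst y)" for y :: "(real^'n) \<times> (real^'n)"
  have x0: "axis i0 (1::real) \<in> std_simplex" by (rule axis_simplex)
  have u0: "column j0 A \<in> convA A" by (rule col_convA)
  have x0Z: "axis i0 1 \<notin> Zset A (column j0 A)" using ij by (simp add: Zset_def matrix_vector_mult_basis)
  obtain q0 p0 where "(q0,p0) \<in> KK A Nn" using ratio_repr[OF Nn Nm u0 x0 x0Z] by blast
  then have KKn: "KK A Nn \<noteq> {}" by blast
  have hc: "continuous_on (KK A Nn) hh" unfolding hh_def
  proof (rule continuous_on_divide)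
    have cA: "continuous_on UNIV (\<lambda>w::real^'n. Nm (A *v w))"
      by (rule continuous_on_compose2[OF isn_cont[OF Nm, of UNIV]]) (auto intro!: continuous_intros)
    show "continuous_on (KK A Nn) (\<lambda>y. Nm (A *v (snd y - fst y)))"
      by (rule continuous_on_compose2[OF cA]) (auto intro!: continuous_intros)
    show "continuous_on (KK A Nn) (\<lambda>y. Nn (snd y - fst y))"
      by (rule continuous_on_compose2[OF isn_cont[OF Nn, of UNIV]]) (auto intro!: continuous_intros)
    show "\<forall>y\<in>KK A Nn. Nn (snd y - fst y) \<noteq> 0"
    proof
      fix y assume y: "y \<in> KK A Nn"
      obtain a b where "y = (a,b)" by (cases y)
      then show "Nn (snd y - fst y) \<noteq> 0" using KK_ne[of a b A Nn] y isn_pos[OF Nn, of "b - a"] by auto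
    qed
  qed
  obtain ys where ys: "ys \<in> KK A Nn" "\<And>y. y \<in> KK A Nn \<Longrightarrow> hh ys \<le> hh y"
    using continuous_attains_inf[OF KK_compact[OF Nn] KKn hc] by blast
  obtain qs ps where ysqp: "ys = (qs, ps)" by (cases ys)
  have Kqp: "(qs,ps) \<in> KK A Nn" using ys(1) ysqp by simp
  note KR = KK_repr[OF Nn Kqp]
  define mu where "mu = 2 * hh ys"
  have muS2: "mu = 2 * Nm (A *v ps - A *v qs) / distN Nn ps (Zset A (A *v qs))"
    using KR(4) by (simp add: mu_def hh_def ysqp algebra_simps)
  have minS2: "is_min S2 mu"
    unfolding is_min_def
  proof
    show "mu \<in> S2" unfolding S2_def using muS2 KR(1,2,3) by blast
    show "\<forall>y\<in>S2. mu \<le> y"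
    proof
      fix y assume "y \<in> S2"
      then obtain u x where ux: "y = 2 * Nm (A *v x - u) / distN Nn x (Zset A u)"
        "u \<in> convA A" "x \<in> std_simplex" "x \<notin> Zset A u" unfolding S2_def by blast
      obtain q p where qp: "(q,p) \<in> KK A Nn"
        "Nm (A *v x - u) / distN Nn x (Zset A u) = Nm (A *v (p - q)) / Nn (p - q)"
        using ratio_repr[OF Nn Nm ux(2,3,4)] by blast
      have "hh ys \<le> hh (q,p)" by (rule ys(2)[OF qp(1)])
      then have "mu \<le> 2 * (Nm (A *v x - u) / distN Nn x (Zset A u))"
        using qp(2) by (simp add: mu_def hh_def)
      then show "mu \<le> y" using ux(1) by simp
    qed
  qed
  have facial: "facial_distance Nm A / Max (range (\<lambda>i. Nn (axis i 1))) \<le> mu"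
    using facial_bound[OF Nn Nm KR(1,2,3)] muS2 by simp
  show ?thesis
    using vS1 vS3 minS2 facial unfolding S1_def S3_def S2_def by blast
qed


end
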